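(* Let $d=2$ and $f\in\mathcal{S}(\mathbb{R}^2)$ with $f(x_0)\ne0$ for some $x_0\in\mathbb{R}^2$. Let $(\xi_x)_{x\in\mathbb{Z}^2}$ be i.i.d. $\mathbb{R}^2$-valued random variables and $T_r^0=\sum_{x\in\mathbb{Z}^2} f((x+\xi_x)/r)$. Then there exist $C>0$, $\eta>0$, $r_0>0$ such that for all $r>r_0$, $$\operatorname{Var}[T_r^0]\ge C r^2\,\mathbb{P}[|\xi_0|\ge\eta r] + O(r^{-1}).$$
   Context: $\mathcal{S}(\mathbb{R}^2)$ is the Schwartz space; $O(r^{-1})$ denotes a quantity bounded in absolute value by a constant times $r^{-1}$ as $r\to\infty$. *)

theory Defs
  imports "HOL-Probability.Probability"
begin

definition dpart :: "2 \<Rightarrow> (real^2 \<Rightarrow> real) \<Rightarrow> (real^2 \<Rightarrow> real)" where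
  "dpart i g = (\<lambda>x. frechet_derivative g (at x) (axis i 1))"

fun dmulti :: "2 list \<Rightarrow> (real^2 \<Rightarrow> real) \<Rightarrow> (real^2 \<Rightarrow> real)" where
  "dmulti [] g = g"
| "dmulti (i # is) g = dpart i (dmulti is g)"

text \<open>Schwartz space S(R^2) (real-valued): all iterated partial derivatives exist
  (each is Frechet differentiable everywhere, hence f is C-infinity) and every
  derivative decays faster than any power of (1+|x|).\<close>
definition schwartz :: "(real^2 \<Rightarrow> real) \<Rightarrow> bool" where
  "schwartz f \<longleftrightarrow>
     (\<forall>is. \<forall>x. dmulti is f differentiable (at x)) \<and>
     (\<forall>is. \<forall>N::nat. \<exists>B. \<forall>x. (1 + norm x) ^ N * \<bar>dmulti is f x\<bar> \<le> B)"

definition latt :: "int \<times> int \<Rightarrow> real^2" where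
  "latt p = vector [real_of_int (fst p), real_of_int (snd p)]"

definition linstat :: "(real^2 \<Rightarrow> real) \<Rightarrow> (int \<times> int \<Rightarrow> 'a \<Rightarrow> real^2) \<Rightarrow> real \<Rightarrow> 'a \<Rightarrow> real" where
  "linstat f \<xi> r \<omega> = (\<Sum>\<^sub>\<infinity>p\<in>(UNIV :: (int \<times> int) set). f ((1 / r) *\<^sub>R (latt p + \<xi> p \<omega>)))"

text \<open>Variance with values in the extended reals (may be +infinity):
  E[(X - E X)^2] as a nonnegative integral.\<close>
definition evariance :: "'a measure \<Rightarrow> ('a \<Rightarrow> real) \<Rightarrow> ereal" where
  "evariance M X = enn2ereal (\<integral>\<^sup>+ \<omega>. ennreal ((X \<omega> - (\<integral>\<omega>'. X \<omega>' \<partial>M))\<^sup>2) \<partial>M)"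

end

theory Submission
  imports Defs
begin

lemma measurable_infsum_countable:
  fixes \<phi> :: "'i \<Rightarrow> 'a \<Rightarrow> real"
  assumes I: "countable I" "infinite I" and meas[measurable]: "\<And>i. i \<in> I \<Longrightarrow> \<phi> i \<in> borel_measurable N"
  shows "Measurable.pred N (\<lambda>\<omega>. (\<lambda>i. \<phi> i \<omega>) summable_on I)"
    and "(\<lambda>\<omega>. infsum (\<lambda>i. \<phi> i \<omega>) I) \<in> borel_measurable N"
proof -
  define e where "e = from_nat_into I"
  have bij: "bij_betw e UNIV I" using bij_betw_from_nat_into[OF I] by (simp add: e_def)
  have eI: "e n \<in> I" for n using bij by (auto simp: bij_betw_def)
  have [measurable]: "\<phi> (e n) \<in> borel_measurable N" for n using eI meas by blast
  have eq: "(\<lambda>i. \<phi> i \<omega>) summable_on I \<longleftrightarrow> summable (\<lambda>n. \<bar>\<phi> (e n) \<omega>\<bar>)" for \<omega>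
  proof -
    have "(\<lambda>i. \<phi> i \<omega>) summable_on I \<longleftrightarrow> (\<lambda>n. \<phi> (e n) \<omega>) summable_on UNIV"
      using summable_on_reindex_bij_betw[OF bij, of "\<lambda>i. \<phi> i \<omega>"] by simp
    also have "\<dots> \<longleftrightarrow> (\<lambda>n. \<bar>\<phi> (e n) \<omega>\<bar>) summable_on UNIV"
      using summable_on_iff_abs_summable_on_real[of "\<lambda>n. \<phi> (e n) \<omega>" UNIV] by (simp only: real_norm_def)
    also have "\<dots> \<longleftrightarrow> summable (\<lambda>n. \<bar>\<phi> (e n) \<omega>\<bar>)"
      by (rule summable_on_UNIV_nonneg_real_iff) simp
    finally show ?thesis .
  qed
  have eq2: "infsum (\<lambda>i. \<phi> i \<omega>) I = (if summable (\<lambda>n. \<bar>\<phi> (e n) \<omega>\<bar>) then suminf (\<lambda>n. \<phi> (e n) \<omega>) else 0)" for \<omega>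
  proof (cases "summable (\<lambda>n. \<bar>\<phi> (e n) \<omega>\<bar>)")
    case True
    have "infsum (\<lambda>i. \<phi> i \<omega>) I = infsum (\<lambda>n. \<phi> (e n) \<omega>) UNIV"
      using infsum_reindex_bij_betw[OF bij, of "\<lambda>i. \<phi> i \<omega>"] by simp
    also have "\<dots> = suminf (\<lambda>n. \<phi> (e n) \<omega>)"
      apply (rule infsumI)
      apply (rule norm_summable_imp_has_sum)
      apply (simp only: real_norm_def True)
      by (rule summable_sums, rule summable_rabs_cancel, rule True)
    finally show ?thesis using True by simp
  next
    case False
    then show ?thesis using eq[of \<omega>] infsum_not_exists by auto
  qed
  have pc: "Measurable.pred N (\<lambda>\<omega>. summable (\<lambda>n. \<bar>\<phi> (e n) \<omega>\<bar>))"
  proof -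
    have "summable (\<lambda>n. \<bar>\<phi> (e n) \<omega>\<bar>) \<longleftrightarrow> (\<Sum>n. ennreal \<bar>\<phi> (e n) \<omega>\<bar>) \<noteq> top" for \<omega>
      by (metis abs_ge_zero ennreal_suminf_neq_top summable_suminf_not_top)
    note eqs = this
    show ?thesis unfolding eqs by measurable
  qed
  show "Measurable.pred N (\<lambda>\<omega>. (\<lambda>i. \<phi> i \<omega>) summable_on I)"
    unfolding eq by (rule pc)
  show "(\<lambda>\<omega>. infsum (\<lambda>i. \<phi> i \<omega>) I) \<in> borel_measurable N"
    unfolding eq2 using pc by measurable
qed

lemma sum_inv_sq_int_aux: "(\<Sum>j\<in>{-int N..int N}. 1/(1+\<bar>real_of_int j\<bar>)^2) \<le> 3 - 2/(real N+1)"
proof (induction N)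
  case 0
  then show ?case by simp
next
  case (Suc N)
  have eq: "{-int (Suc N)..int (Suc N)} = insert (-int (Suc N)) (insert (int (Suc N)) {-int N..int N})"
    by auto
  have "(\<Sum>j\<in>{-int (Suc N)..int (Suc N)}. 1/(1+\<bar>real_of_int j\<bar>)^2)
      = 2/(real N+2)^2 + (\<Sum>j\<in>{-int N..int N}. 1/(1+\<bar>real_of_int j\<bar>)^2)"
    unfolding eq by (simp add: add.commute)
  also have "\<dots> \<le> 2/(real N+2)^2 + (3 - 2/(real N+1))" using Suc by simp
  also have "\<dots> \<le> 3 - 2/(real (Suc N)+1)"
  proof -
    have e: "2/(real N+1) - 2/(real N+2) = 2/((real N+1)*(real N+2))" by (simp add: field_simps)
    have "2/(real N+2)^2 \<le> 2/((real N+1)*(real N+2))"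
      by (rule divide_left_mono) (auto simp: power2_eq_square intro!: mult_right_mono mult_pos_pos)
    then have "2/(real N+2)^2 \<le> 2/(real N+1) - 2/(real N+2)" using e by simp
    moreover have "2/(real (Suc N) + 1) = 2/(real N + 2)" by (simp add: add.commute)
    ultimately show ?thesis by linarith
  qed
  finally show ?case .
qed

lemma sum_inv_sq_int: "finite H \<Longrightarrow> (\<Sum>j\<in>H. 1/(1+\<bar>real_of_int j\<bar>)^2) \<le> 3"
proof -
  assume H: "finite H"
  define N where "N = nat (Max (insert 0 (abs ` H)))"
  have sub: "H \<subseteq> {-int N..int N}"
  proof
    fix j assume "j \<in> H"
    then have "\<bar>j\<bar> \<le> Max (insert 0 (abs ` H))" using H by (intro Max_ge) auto
    then show "j \<in> {-int N..int N}" unfolding N_def by auto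
  qed
  have "(\<Sum>j\<in>H. 1/(1+\<bar>real_of_int j\<bar>)^2) \<le> (\<Sum>j\<in>{-int N..int N}. 1/(1+\<bar>real_of_int j\<bar>)^2)"
    by (rule sum_mono2[OF _ sub]) auto
  also have "\<dots> \<le> 3 - 2/(real N+1)" by (rule sum_inv_sq_int_aux)
  also have "\<dots> \<le> 3" by simp
  finally show ?thesis .
qed

lemma psi_shift:
  fixes r s :: real and k :: int
  assumes r: "r \<ge> 1"
  shows "1/(1+\<bar>real_of_int k + s\<bar>/r)^2 \<le> 4*r^2/(1+\<bar>real_of_int (k + \<lfloor>s\<rfloor>)\<bar>)^2"
proof -
  define j where "j = real_of_int (k + \<lfloor>s\<rfloor>)"
  define t where "t = s - real_of_int \<lfloor>s\<rfloor>"
  have t: "0 \<le> t" "t < 1" unfolding t_def by linarith+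
  have ks: "real_of_int k + s = j + t" unfolding j_def t_def by simp
  define a where "a = \<bar>j + t\<bar>/r"
  have a0: "a \<ge> 0" unfolding a_def using r by simp
  have "\<bar>j\<bar> \<le> \<bar>j + t\<bar> + 1" using t by linarith
  then have "\<bar>j\<bar>/r \<le> a + 1/r" unfolding a_def using r by (simp add: field_simps)
  moreover have "(1+a)*(1+1/r) = 1 + a + 1/r + a/r" by (simp add: algebra_simps add_divide_distrib)
  moreover have "a/r \<ge> 0" using a0 r by simp
  ultimately have h1: "1 + \<bar>j\<bar>/r \<le> (1+a)*(1+1/r)" by linarith
  have h2: "(1+\<bar>j\<bar>)/r \<le> 1 + \<bar>j\<bar>/r" using r by (simp add: field_simps)
  have h3: "1+1/r \<le> 2" using r by (simp add: field_simps)
  have "(1+\<bar>j\<bar>)/r \<le> (1+a)*2"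
  proof -
    have "(1+a)*(1+1/r) \<le> (1+a)*2" by (rule mult_left_mono[OF h3]) (use a0 in simp)
    then show ?thesis using h1 h2 by linarith
  qed
  then have "((1+\<bar>j\<bar>)/r)^2 \<le> ((1+a)*2)^2"
    by (intro power_mono) (use r in auto)
  then have "(1+\<bar>j\<bar>)^2 \<le> 4*r^2*(1+a)^2"
    using r by (simp add: field_simps power2_eq_square)
  then have "1/(1+a)^2 \<le> 4*r^2/(1+\<bar>j\<bar>)^2"
    using a0 by (simp add: field_simps)
  then show ?thesis unfolding ks a_def j_def by simp
qed

lemma sum_psi:
  fixes r s :: real
  assumes r: "r \<ge> 1" and G: "finite G"
  shows "(\<Sum>k\<in>G. 1/(1+\<bar>real_of_int k + s\<bar>/r)^2) \<le> 12*r^2"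
proof -
  have "(\<Sum>k\<in>G. 1/(1+\<bar>real_of_int k + s\<bar>/r)^2) \<le> (\<Sum>k\<in>G. 4*r^2/(1+\<bar>real_of_int (k + \<lfloor>s\<rfloor>)\<bar>)^2)"
    by (intro sum_mono psi_shift r)
  also have "\<dots> = 4*r^2 * (\<Sum>k\<in>G. 1/(1+\<bar>real_of_int (k + \<lfloor>s\<rfloor>)\<bar>)^2)"
    by (simp add: sum_distrib_left)
  also have "(\<Sum>k\<in>G. 1/(1+\<bar>real_of_int (k + \<lfloor>s\<rfloor>)\<bar>)^2) = (\<Sum>j\<in>(\<lambda>k. k + \<lfloor>s\<rfloor>) ` G. 1/(1+\<bar>real_of_int j\<bar>)^2)"
    by (subst sum.reindex) (auto simp: inj_on_def)
  also have "\<dots> \<le> 3" using G by (intro sum_inv_sq_int) auto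
  finally show ?thesis by (simp add: mult_left_mono)
qed

lemma latt_comp: "latt p $ 1 = real_of_int (fst p)" "latt p $ 2 = real_of_int (snd p)"
  by (simp_all add: latt_def)

lemma f_decay_bound:
  fixes f :: "real^2 \<Rightarrow> real"
  assumes B: "\<And>z. (1+norm z)^4 * \<bar>f z\<bar> \<le> B"
  shows "\<bar>f z\<bar> \<le> B / ((1+\<bar>z$1\<bar>)^2 * (1+\<bar>z$2\<bar>)^2)"
proof -
  have c1: "\<bar>z$1\<bar> \<le> norm z" "\<bar>z$2\<bar> \<le> norm z" by (simp_all add: component_le_norm_cart)
  have "(1+\<bar>z$1\<bar>)^2 * (1+\<bar>z$2\<bar>)^2 \<le> (1+norm z)^2 * (1+norm z)^2"
    using c1 by (intro mult_mono power_mono) auto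
  also have "\<dots> = (1+norm z)^4" by simp
  finally have "(1+\<bar>z$1\<bar>)^2 * (1+\<bar>z$2\<bar>)^2 * \<bar>f z\<bar> \<le> B"
    using B[of z] by (smt (verit) abs_ge_zero mult_right_mono)
  moreover have "(1+\<bar>z$1\<bar>)^2 * (1+\<bar>z$2\<bar>)^2 > 0" by (intro mult_pos_pos) auto
  ultimately show ?thesis by (simp add: field_simps)
qed

lemma lattice_bound:
  fixes f :: "real^2 \<Rightarrow> real"
  assumes B: "\<And>z. (1+norm z)^4 * \<bar>f z\<bar> \<le> B" and r: "r \<ge> 1" and F: "finite F"
  shows "(\<Sum>p\<in>F. \<bar>f ((1/r) *\<^sub>R (latt p + y))\<bar>) \<le> B * (12*r^2)^2"
proof -
  define \<psi> where "\<psi> s = 1/(1+\<bar>s\<bar>/r)^2" for s :: real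
  have B0: "B \<ge> 0" using B[of 0] by (smt (verit) abs_ge_zero zero_le_power norm_ge_zero mult_nonneg_nonneg)
  have psi0: "\<psi> s \<ge> 0" for s unfolding \<psi>_def by simp
  have trm: "\<bar>f ((1/r) *\<^sub>R (latt p + y))\<bar> \<le> B * (\<psi> (real_of_int (fst p) + y$1) * \<psi> (real_of_int (snd p) + y$2))" for p
  proof -
    let ?z = "(1/r) *\<^sub>R (latt p + y)"
    have z1: "\<bar>?z$1\<bar> = \<bar>real_of_int (fst p) + y$1\<bar>/r" using r by (simp add: latt_comp abs_mult)
    have z2: "\<bar>?z$2\<bar> = \<bar>real_of_int (snd p) + y$2\<bar>/r" using r by (simp add: latt_comp abs_mult)
    show ?thesis using f_decay_bound[OF B, of ?z] unfolding z1 z2 \<psi>_def by simp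
  qed
  have "(\<Sum>p\<in>F. \<bar>f ((1/r) *\<^sub>R (latt p + y))\<bar>) \<le> (\<Sum>p\<in>F. B * (\<psi> (real_of_int (fst p) + y$1) * \<psi> (real_of_int (snd p) + y$2)))"
    by (intro sum_mono trm)
  also have "\<dots> \<le> (\<Sum>p\<in>fst ` F \<times> snd ` F. B * (\<psi> (real_of_int (fst p) + y$1) * \<psi> (real_of_int (snd p) + y$2)))"
  proof (rule sum_mono2)
    show "F \<subseteq> fst ` F \<times> snd ` F" by force
  qed (use F B0 psi0 in \<open>auto intro!: mult_nonneg_nonneg\<close>)
  also have "\<dots> = B * ((\<Sum>a\<in>fst ` F. \<psi> (real_of_int a + y$1)) * (\<Sum>b\<in>snd ` F. \<psi> (real_of_int b + y$2)))"
  proof -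
    have "(\<Sum>p\<in>fst ` F \<times> snd ` F. \<psi> (real_of_int (fst p) + y$1) * \<psi> (real_of_int (snd p) + y$2))
        = (\<Sum>a\<in>fst ` F. \<Sum>b\<in>snd ` F. \<psi> (real_of_int a + y$1) * \<psi> (real_of_int b + y$2))"
      by (simp add: sum.cartesian_product split_def)
    then show ?thesis by (simp add: sum_distrib_left[symmetric] sum_product)
  qed
  also have "\<dots> \<le> B * ((12*r^2) * (12*r^2))"
    unfolding \<psi>_def using F r B0
    by (intro mult_left_mono mult_mono sum_psi sum_nonneg) auto
  finally show ?thesis by (simp add: power2_eq_square)
qed

lemma (in prob_space) int_bdd:
  fixes g :: "'a \<Rightarrow> real"
  assumes "g \<in> borel_measurable M" "\<And>\<omega>. \<omega> \<in> space M \<Longrightarrow> \<bar>g \<omega>\<bar> \<le> B"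
  shows "integrable M g"
  by (rule integrable_const_bound[where B=B]) (use assms in auto)

lemma (in prob_space) split_lower:
  fixes U :: "'a \<Rightarrow> 'b" and X2 :: "'a \<Rightarrow> 'b" and G :: "'b \<times> 'b \<Rightarrow> ennreal"
  assumes ind: "indep_var N X2 Nu U"
    and G: "G \<in> borel_measurable (N \<Otimes>\<^sub>M Nu)"
    and inner: "AE \<omega> in M. V \<le> (\<integral>\<^sup>+ \<omega>'. G (X2 \<omega>, U \<omega>') \<partial>M)"
  shows "V \<le> (\<integral>\<^sup>+ \<omega>. G (X2 \<omega>, U \<omega>) \<partial>M)"
proof -
  have rv1[measurable]: "X2 \<in> measurable M N" using indep_var_rv1[OF ind] .
  have rv2[measurable]: "U \<in> measurable M Nu" using indep_var_rv2[OF ind] .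
  have eqd: "distr M N X2 \<Otimes>\<^sub>M distr M Nu U = distr M (N \<Otimes>\<^sub>M Nu) (\<lambda>x. (X2 x, U x))"
    using ind unfolding indep_var_distribution_eq by blast
  interpret pU: prob_space "distr M Nu U" by (rule prob_space_distr) simp
  have s1: "sets (distr M N X2 \<Otimes>\<^sub>M distr M Nu U) = sets (N \<Otimes>\<^sub>M Nu)"
    by (intro sets_pair_measure_cong) simp_all
  have s2: "sets (N \<Otimes>\<^sub>M distr M Nu U) = sets (N \<Otimes>\<^sub>M Nu)"
    by (intro sets_pair_measure_cong) simp_all
  have G1: "G \<in> borel_measurable (distr M N X2 \<Otimes>\<^sub>M distr M Nu U)"
    by (subst measurable_cong_sets[OF s1 refl]) (rule G)
  have G2: "G \<in> borel_measurable (N \<Otimes>\<^sub>M distr M Nu U)"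
    by (subst measurable_cong_sets[OF s2 refl]) (rule G)
  have "(\<integral>\<^sup>+ \<omega>. G (X2 \<omega>, U \<omega>) \<partial>M) = integral\<^sup>N (distr M (N \<Otimes>\<^sub>M Nu) (\<lambda>x. (X2 x, U x))) G"
    by (subst nn_integral_distr) (use G in auto)
  also have "\<dots> = integral\<^sup>N (distr M N X2 \<Otimes>\<^sub>M distr M Nu U) G" unfolding eqd ..
  also have "\<dots> = (\<integral>\<^sup>+ b. \<integral>\<^sup>+ u. G (b, u) \<partial>distr M Nu U \<partial>distr M N X2)"
    by (rule pU.nn_integral_fst[symmetric, OF G1])
  also have "\<dots> = (\<integral>\<^sup>+ \<omega>. (\<integral>\<^sup>+ u. G (X2 \<omega>, u) \<partial>distr M Nu U) \<partial>M)"
  proof (subst nn_integral_distr)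
    have "(\<lambda>b. \<integral>\<^sup>+ u. G (b, u) \<partial>distr M Nu U) \<in> borel_measurable N"
      by (rule pU.borel_measurable_nn_integral_fst[OF G2])
    then show "(\<lambda>b. \<integral>\<^sup>+ u. G (b, u) \<partial>distr M Nu U) \<in> borel_measurable (distr M N X2)" by simp
  qed auto
  also have "\<dots> = (\<integral>\<^sup>+ \<omega>. (\<integral>\<^sup>+ \<omega>'. G (X2 \<omega>, U \<omega>') \<partial>M) \<partial>M)"
  proof (rule nn_integral_cong)
    fix \<omega> assume "\<omega> \<in> space M"
    then have "X2 \<omega> \<in> space N" using rv1 by (auto simp: measurable_def)
    then have "(\<lambda>u. G (X2 \<omega>, u)) \<in> borel_measurable Nu"
      using measurable_comp[OF measurable_Pair1'[of "X2 \<omega>" N Nu] G] by (simp add: comp_def)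
    then show "(\<integral>\<^sup>+ u. G (X2 \<omega>, u) \<partial>distr M Nu U) = (\<integral>\<^sup>+ \<omega>'. G (X2 \<omega>, U \<omega>') \<partial>M)"
      by (subst nn_integral_distr) auto
  qed
  also have "\<dots> \<ge> (\<integral>\<^sup>+ \<omega>. V \<partial>M)"
    by (rule nn_integral_mono_AE) (use inner in auto)
  finally show ?thesis by (simp add: emeasure_space_1)
qed

lemma (in prob_space) var_lower:
  fixes Y :: "'a \<Rightarrow> real"
  assumes Y[measurable]: "Y \<in> borel_measurable M" and int: "integrable M (\<lambda>\<omega>. (Y \<omega> - c)^2)"
    and E: "E1 \<in> events" "E2 \<in> events"
    and h1: "\<And>\<omega>. \<omega> \<in> E1 \<Longrightarrow> \<bar>Y \<omega> - v\<bar> \<le> a"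
    and h2: "\<And>\<omega>. \<omega> \<in> E2 \<Longrightarrow> \<bar>Y \<omega>\<bar> \<le> a"
    and v: "\<bar>v\<bar> \<ge> 4*a" and a: "a \<ge> 0"
  shows "a^2 * min (prob E1) (prob E2) \<le> (\<integral>\<omega>. (Y \<omega> - c)^2 \<partial>M)"
proof -
  have key: "a^2 * prob E \<le> (\<integral>\<omega>. (Y \<omega> - c)^2 \<partial>M)"
    if E: "E \<in> events" and hE: "\<And>\<omega>. \<omega> \<in> E \<Longrightarrow> a \<le> \<bar>Y \<omega> - c\<bar>" for E
  proof -
    have "a^2 * prob E = (\<integral>\<omega>. a^2 * indicator E \<omega> \<partial>M)"
      using E by simp
    also have "\<dots> \<le> (\<integral>\<omega>. (Y \<omega> - c)^2 \<partial>M)"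
    proof (rule integral_mono)
      show "integrable M (\<lambda>\<omega>. a^2 * indicator E \<omega>)" using E by (auto intro!: integrable_real_indicator simp: emeasure_eq_measure)
      show "integrable M (\<lambda>\<omega>. (Y \<omega> - c)^2)" by (rule int)
      fix \<omega> assume "\<omega> \<in> space M"
      show "a^2 * indicator E \<omega> \<le> (Y \<omega> - c)^2"
      proof (cases "\<omega> \<in> E")
        case True
        then have "a^2 \<le> \<bar>Y \<omega> - c\<bar>^2" using hE a by (intro power_mono) auto
        then show ?thesis using True by simp
      qed simp
    qed
    finally show ?thesis .
  qed
  show ?thesis
  proof (cases "\<bar>c - v\<bar> \<ge> 2*a")
    case True
    have "a^2 * prob E1 \<le> (\<integral>\<omega>. (Y \<omega> - c)^2 \<partial>M)"
      by (rule key[OF E(1)]) (use h1 True in force)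
    moreover have "a^2 * min (prob E1) (prob E2) \<le> a^2 * prob E1" by (intro mult_left_mono) auto
    ultimately show ?thesis by linarith
  next
    case False
    have "a^2 * prob E2 \<le> (\<integral>\<omega>. (Y \<omega> - c)^2 \<partial>M)"
      by (rule key[OF E(2)]) (use h2 False v in force)
    moreover have "a^2 * min (prob E1) (prob E2) \<le> a^2 * prob E2" by (intro mult_left_mono) auto
    ultimately show ?thesis by linarith
  qed
qed

lemma (in prob_space) var_sum_indep:
  fixes X :: "'i \<Rightarrow> 'a \<Rightarrow> real"
  assumes S: "finite S" and ind: "indep_vars (\<lambda>_. borel) X S"
    and bd: "\<And>i \<omega>. i \<in> S \<Longrightarrow> \<omega> \<in> space M \<Longrightarrow> \<bar>X i \<omega>\<bar> \<le> Bd"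
  shows "(\<Sum>i\<in>S. \<integral>\<omega>. (X i \<omega> - expectation (X i))^2 \<partial>M) \<le> (\<integral>\<omega>. ((\<Sum>i\<in>S. X i \<omega>) + \<beta>)^2 \<partial>M)"
proof -
  have meas[measurable]: "X i \<in> borel_measurable M" if "i \<in> S" for i
    using ind that by (auto simp: indep_vars_def)
  define \<mu> where "\<mu> i = expectation (X i)" for i
  define Z where "Z i \<omega> = X i \<omega> - \<mu> i" for i \<omega>
  have intX: "integrable M (X i)" if "i \<in> S" for i
    by (rule int_bdd[OF meas[OF that]]) (use bd that in auto)
  have mub: "\<bar>\<mu> i\<bar> \<le> Bd" if "i \<in> S" for i
  proof -
    have "\<bar>\<mu> i\<bar> \<le> (\<integral>\<omega>. \<bar>X i \<omega>\<bar> \<partial>M)" unfolding \<mu>_def using integral_norm_bound[of M "X i"] by simp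
    also have "\<dots> \<le> (\<integral>\<omega>. Bd \<partial>M)"
      by (rule integral_mono) (use intX[OF that] bd that in auto)
    also have "\<dots> = Bd" by (simp add: prob_space)
    finally show ?thesis .
  qed
  have Zm[measurable]: "Z i \<in> borel_measurable M" if "i \<in> S" for i
    unfolding Z_def using meas[OF that] by measurable
  have Zb: "\<bar>Z i \<omega>\<bar> \<le> 2*Bd" if "i \<in> S" "\<omega> \<in> space M" for i \<omega>
    unfolding Z_def using bd[OF that] mub[OF that(1)] by linarith
  have intZ: "integrable M (Z i)" if "i \<in> S" for i
    by (rule int_bdd[OF Zm[OF that]]) (use Zb that in auto)
  have intZZ: "integrable M (\<lambda>\<omega>. Z i \<omega> * Z j \<omega>)" if "i \<in> S" "j \<in> S" for i j
  proof (rule int_bdd)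
    show "(\<lambda>\<omega>. Z i \<omega> * Z j \<omega>) \<in> borel_measurable M" using Zm[OF that(1)] Zm[OF that(2)] by measurable
    fix \<omega> assume w: "\<omega> \<in> space M"
    have "\<bar>Z i \<omega> * Z j \<omega>\<bar> = \<bar>Z i \<omega>\<bar> * \<bar>Z j \<omega>\<bar>" by (simp add: abs_mult)
    also have "\<dots> \<le> (2*Bd) * (2*Bd)" using Zb[OF that(1) w] Zb[OF that(2) w] by (intro mult_mono) auto
    finally show "\<bar>Z i \<omega> * Z j \<omega>\<bar> \<le> (2*Bd) * (2*Bd)" .
  qed
  have EZ: "expectation (Z i) = 0" if "i \<in> S" for i
    unfolding Z_def \<mu>_def using intX[OF that] by (simp add: prob_space)
  have indZ: "indep_vars (\<lambda>_. borel) Z S"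
    unfolding Z_def by (rule indep_vars_compose2[OF ind]) simp
  have EZZ: "expectation (\<lambda>\<omega>. Z i \<omega> * Z j \<omega>) = (if i = j then expectation (\<lambda>\<omega>. (Z i \<omega>)^2) else 0)"
    if "i \<in> S" "j \<in> S" for i j
  proof (cases "i = j")
    case False
    have ind2: "indep_vars (\<lambda>_. borel) Z {i, j}" by (rule indep_vars_subset[OF indZ]) (use that in auto)
    have "expectation (\<lambda>\<omega>. \<Prod>k\<in>{i,j}. Z k \<omega>) = (\<Prod>k\<in>{i,j}. expectation (Z k))"
      by (rule indep_vars_lebesgue_integral[OF _ ind2]) (use that intZ in auto)
    then show ?thesis using False EZ that by simp
  qed (simp add: power2_eq_square)
  define \<gamma> where "\<gamma> = (\<Sum>i\<in>S. \<mu> i) + \<beta>"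
  have expand: "((\<Sum>i\<in>S. X i \<omega>) + \<beta>)^2 = (\<Sum>i\<in>S. \<Sum>j\<in>S. Z i \<omega> * Z j \<omega>) + (2*\<gamma>) * (\<Sum>i\<in>S. Z i \<omega>) + \<gamma>^2" for \<omega>
  proof -
    have "(\<Sum>i\<in>S. X i \<omega>) + \<beta> = (\<Sum>i\<in>S. Z i \<omega>) + \<gamma>"
      unfolding Z_def \<gamma>_def by (simp add: sum_subtractf)
    then show ?thesis by (simp add: power2_eq_square sum_product algebra_simps)
  qed
  have "(\<integral>\<omega>. ((\<Sum>i\<in>S. X i \<omega>) + \<beta>)^2 \<partial>M)
      = (\<integral>\<omega>. (\<Sum>i\<in>S. \<Sum>j\<in>S. Z i \<omega> * Z j \<omega>) + (2*\<gamma>) * (\<Sum>i\<in>S. Z i \<omega>) + \<gamma>^2 \<partial>M)"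
    unfolding expand ..
  also have "\<dots> = (\<Sum>i\<in>S. \<Sum>j\<in>S. expectation (\<lambda>\<omega>. Z i \<omega> * Z j \<omega>)) + (2*\<gamma>) * (\<Sum>i\<in>S. expectation (Z i)) + \<gamma>^2"
  proof -
    have i1: "integrable M (\<lambda>\<omega>. \<Sum>i\<in>S. \<Sum>j\<in>S. Z i \<omega> * Z j \<omega>)"
      using intZZ by (intro Bochner_Integration.integrable_sum) auto
    have i2: "integrable M (\<lambda>\<omega>. (2*\<gamma>) * (\<Sum>i\<in>S. Z i \<omega>))"
      using intZ by (intro integrable_mult_right Bochner_Integration.integrable_sum) auto
    have "(\<integral>\<omega>. (\<Sum>i\<in>S. \<Sum>j\<in>S. Z i \<omega> * Z j \<omega>) + (2*\<gamma>) * (\<Sum>i\<in>S. Z i \<omega>) + \<gamma>^2 \<partial>M)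
        = (\<integral>\<omega>. (\<Sum>i\<in>S. \<Sum>j\<in>S. Z i \<omega> * Z j \<omega>) \<partial>M) + (\<integral>\<omega>. (2*\<gamma>) * (\<Sum>i\<in>S. Z i \<omega>) \<partial>M) + \<gamma>^2"
      using i1 i2 by (simp add: Bochner_Integration.integral_add Bochner_Integration.integrable_add prob_space)
    also have "(\<integral>\<omega>. (\<Sum>i\<in>S. \<Sum>j\<in>S. Z i \<omega> * Z j \<omega>) \<partial>M) = (\<Sum>i\<in>S. \<Sum>j\<in>S. expectation (\<lambda>\<omega>. Z i \<omega> * Z j \<omega>))"
      using intZZ by (simp add: Bochner_Integration.integral_sum Bochner_Integration.integrable_sum)
    also have "(\<integral>\<omega>. (2*\<gamma>) * (\<Sum>i\<in>S. Z i \<omega>) \<partial>M) = (2*\<gamma>) * (\<Sum>i\<in>S. expectation (Z i))"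
      using intZ by (simp add: Bochner_Integration.integral_sum)
    finally show ?thesis .
  qed
  also have "\<dots> = (\<Sum>i\<in>S. expectation (\<lambda>\<omega>. (Z i \<omega>)^2)) + \<gamma>^2"
  proof -
    have "(\<Sum>i\<in>S. \<Sum>j\<in>S. expectation (\<lambda>\<omega>. Z i \<omega> * Z j \<omega>)) = (\<Sum>i\<in>S. \<Sum>j\<in>S. (if i = j then expectation (\<lambda>\<omega>. (Z i \<omega>)^2) else 0))"
      using EZZ by (intro sum.cong refl) auto
    also have "\<dots> = (\<Sum>i\<in>S. expectation (\<lambda>\<omega>. (Z i \<omega>)^2))"
      using S by (simp add: if_distrib sum.delta cong: if_cong)
    finally show ?thesis using EZ by simp
  qed
  finally have "(\<integral>\<omega>. ((\<Sum>i\<in>S. X i \<omega>) + \<beta>)^2 \<partial>M) = (\<Sum>i\<in>S. expectation (\<lambda>\<omega>. (Z i \<omega>)^2)) + \<gamma>^2" .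
  then show ?thesis unfolding Z_def \<mu>_def by simp
qed

lemma (in prob_space) as_summable:
  fixes f :: "real^2 \<Rightarrow> real" and \<xi> :: "int \<times> int \<Rightarrow> 'a \<Rightarrow> real^2"
  assumes fm[measurable]: "f \<in> borel_measurable borel"
   and B: "\<And>z. (1+norm z)^4 * \<bar>f z\<bar> \<le> B" and r: "r \<ge> 1"
   and \<xi>m[measurable]: "\<And>p. \<xi> p \<in> borel_measurable M"
   and dst: "\<And>p. distr M borel (\<xi> p) = distr M borel (\<xi> (0,0))"
  shows "AE \<omega> in M. (\<lambda>p. f ((1/r) *\<^sub>R (latt p + \<xi> p \<omega>))) summable_on UNIV"
proof -
  define e :: "nat \<Rightarrow> int \<times> int" where "e = from_nat_into UNIV"
  have bij: "bij_betw e UNIV UNIV" unfolding e_def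
    by (rule bij_betw_from_nat_into) (auto simp: infinite_UNIV_char_0 finite_prod)
  define K where "K = B * (12*r^2)^2"
  have ptw: "(\<Sum>n. ennreal \<bar>f ((1/r) *\<^sub>R (latt (e n) + y))\<bar>) \<le> ennreal K" for y
  proof (rule suminf_le_const)
    show "summable (\<lambda>n. ennreal \<bar>f ((1/r) *\<^sub>R (latt (e n) + y))\<bar>)" by (rule summableI)
    fix N
    have inj: "inj_on e {..<N}" using bij by (auto simp: bij_betw_def inj_on_def)
    have "(\<Sum>n<N. \<bar>f ((1/r) *\<^sub>R (latt (e n) + y))\<bar>) = (\<Sum>p\<in>e ` {..<N}. \<bar>f ((1/r) *\<^sub>R (latt p + y))\<bar>)"
      by (rule sum.reindex[OF inj, symmetric, unfolded comp_def])
    also have "\<dots> \<le> K" unfolding K_def by (rule lattice_bound[OF B r]) simp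
    finally show "(\<Sum>n<N. ennreal \<bar>f ((1/r) *\<^sub>R (latt (e n) + y))\<bar>) \<le> ennreal K"
      by (simp add: ennreal_leI)
  qed
  have m1: "(\<lambda>\<omega>. ennreal \<bar>f ((1/r) *\<^sub>R (latt p + \<xi> q \<omega>))\<bar>) \<in> borel_measurable M" for p q
    by measurable
  have "(\<integral>\<^sup>+ \<omega>. (\<Sum>n. ennreal \<bar>f ((1/r) *\<^sub>R (latt (e n) + \<xi> (e n) \<omega>))\<bar>) \<partial>M)
      = (\<Sum>n. \<integral>\<^sup>+ \<omega>. ennreal \<bar>f ((1/r) *\<^sub>R (latt (e n) + \<xi> (e n) \<omega>))\<bar> \<partial>M)"
    by (rule nn_integral_suminf) measurable
  also have "\<dots> = (\<Sum>n. \<integral>\<^sup>+ \<omega>. ennreal \<bar>f ((1/r) *\<^sub>R (latt (e n) + \<xi> (0,0) \<omega>))\<bar> \<partial>M)"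
  proof (rule suminf_cong)
    fix n
    have "(\<integral>\<^sup>+ \<omega>. ennreal \<bar>f ((1/r) *\<^sub>R (latt (e n) + \<xi> (e n) \<omega>))\<bar> \<partial>M)
        = (\<integral>\<^sup>+ y. ennreal \<bar>f ((1/r) *\<^sub>R (latt (e n) + y))\<bar> \<partial>distr M borel (\<xi> (e n)))"
      by (subst nn_integral_distr) auto
    also have "\<dots> = (\<integral>\<^sup>+ y. ennreal \<bar>f ((1/r) *\<^sub>R (latt (e n) + y))\<bar> \<partial>distr M borel (\<xi> (0,0)))"
      by (subst dst[of "e n"]) (rule refl)
    also have "\<dots> = (\<integral>\<^sup>+ \<omega>. ennreal \<bar>f ((1/r) *\<^sub>R (latt (e n) + \<xi> (0,0) \<omega>))\<bar> \<partial>M)"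
      by (subst nn_integral_distr) auto
    finally show "(\<integral>\<^sup>+ \<omega>. ennreal \<bar>f ((1/r) *\<^sub>R (latt (e n) + \<xi> (e n) \<omega>))\<bar> \<partial>M)
        = (\<integral>\<^sup>+ \<omega>. ennreal \<bar>f ((1/r) *\<^sub>R (latt (e n) + \<xi> (0,0) \<omega>))\<bar> \<partial>M)" .
  qed
  also have "\<dots> = (\<integral>\<^sup>+ \<omega>. (\<Sum>n. ennreal \<bar>f ((1/r) *\<^sub>R (latt (e n) + \<xi> (0,0) \<omega>))\<bar>) \<partial>M)"
    by (rule nn_integral_suminf[symmetric]) measurable
  also have "\<dots> \<le> (\<integral>\<^sup>+ \<omega>. ennreal K \<partial>M)"
    by (rule nn_integral_mono) (rule ptw)
  also have "\<dots> < top" by (simp add: emeasure_space_1)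
  finally have fin: "(\<integral>\<^sup>+ \<omega>. (\<Sum>n. ennreal \<bar>f ((1/r) *\<^sub>R (latt (e n) + \<xi> (e n) \<omega>))\<bar>) \<partial>M) \<noteq> top"
    by simp
  have mm: "(\<lambda>\<omega>. \<Sum>n. ennreal \<bar>f ((1/r) *\<^sub>R (latt (e n) + \<xi> (e n) \<omega>))\<bar>) \<in> borel_measurable M"
    by measurable
  have "AE \<omega> in M. (\<Sum>n. ennreal \<bar>f ((1/r) *\<^sub>R (latt (e n) + \<xi> (e n) \<omega>))\<bar>) \<noteq> top"
    using nn_integral_PInf_AE[OF mm] fin unfolding infinity_ennreal_def by blast
  then show ?thesis
  proof (rule AE_mp, intro AE_I2 impI)
    fix \<omega> assume "(\<Sum>n. ennreal \<bar>f ((1/r) *\<^sub>R (latt (e n) + \<xi> (e n) \<omega>))\<bar>) \<noteq> top"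
    then have "summable (\<lambda>n. \<bar>f ((1/r) *\<^sub>R (latt (e n) + \<xi> (e n) \<omega>))\<bar>)"
      by (intro summable_suminf_not_top) auto
    then have "(\<lambda>n. \<bar>f ((1/r) *\<^sub>R (latt (e n) + \<xi> (e n) \<omega>))\<bar>) summable_on UNIV"
      by (subst summable_on_UNIV_nonneg_real_iff) auto
    then have "(\<lambda>n. f ((1/r) *\<^sub>R (latt (e n) + \<xi> (e n) \<omega>))) summable_on UNIV"
      using summable_on_iff_abs_summable_on_real[of "\<lambda>n. f ((1/r) *\<^sub>R (latt (e n) + \<xi> (e n) \<omega>))" UNIV] by (simp only: real_norm_def)
    then show "(\<lambda>p. f ((1/r) *\<^sub>R (latt p + \<xi> p \<omega>))) summable_on UNIV"
      using summable_on_reindex_bij_betw[OF bij, of "\<lambda>p. f ((1/r) *\<^sub>R (latt p + \<xi> p \<omega>))"] by simp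
  qed
qed

lemma card_int_interval:
  fixes c L :: real assumes "L \<ge> 2"
  shows "real (card {\<lceil>c\<rceil>..\<lfloor>c + L\<rfloor>}) \<ge> L/2"
proof -
  have "real_of_int (\<lfloor>c + L\<rfloor> - \<lceil>c\<rceil> + 1) \<ge> L - 1"
    using floor_correct[of "c+L"] ceiling_correct[of c] by linarith
  then have "real_of_int (\<lfloor>c + L\<rfloor> - \<lceil>c\<rceil> + 1) \<ge> L/2" using assms by linarith
  moreover have "\<lfloor>c + L\<rfloor> - \<lceil>c\<rceil> + 1 \<ge> 0" using \<open>real_of_int _ \<ge> L - 1\<close> assms by linarith
  ultimately show ?thesis by (simp add: card_atLeastAtMost_int)
qed

lemma box_norm:
  fixes x0 :: "real^2" and r \<delta> :: real and p :: "int \<times> int"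
  assumes r: "r > 0"
    and p1: "fst p \<in> {\<lceil>r * x0$1 - r*\<delta>/2\<rceil>..\<lfloor>r * x0$1 - r*\<delta>/2 + r*\<delta>\<rfloor>}"
    and p2: "snd p \<in> {\<lceil>r * x0$2 - r*\<delta>/2\<rceil>..\<lfloor>r * x0$2 - r*\<delta>/2 + r*\<delta>\<rfloor>}"
  shows "norm ((1/r) *\<^sub>R latt p - x0) \<le> \<delta>"
proof -
  have i1: "\<bar>real_of_int (fst p) / r - x0$1\<bar> \<le> \<delta>/2"
  proof -
    have "r * x0$1 - r*\<delta>/2 \<le> real_of_int (fst p)" "real_of_int (fst p) \<le> r * x0$1 + r*\<delta>/2"
      using p1 ceiling_le_iff le_floor_iff by (auto simp: algebra_simps) (smt (verit) ceiling_le_iff le_floor_iff)+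
    moreover have "r*\<delta>/2 = r * (\<delta>/2)" by simp
    ultimately have "\<bar>real_of_int (fst p) - r * x0$1\<bar> \<le> r * (\<delta>/2)" unfolding abs_le_iff by linarith
    then have "\<bar>(real_of_int (fst p) - r * x0$1) / r\<bar> \<le> \<delta>/2" using r by (simp add: abs_div field_simps)
    then show ?thesis using r by (simp add: diff_divide_distrib)
  qed
  have i2: "\<bar>real_of_int (snd p) / r - x0$2\<bar> \<le> \<delta>/2"
  proof -
    have "r * x0$2 - r*\<delta>/2 \<le> real_of_int (snd p)" "real_of_int (snd p) \<le> r * x0$2 + r*\<delta>/2"
      using p2 ceiling_le_iff le_floor_iff by (auto simp: algebra_simps) (smt (verit) ceiling_le_iff le_floor_iff)+
    moreover have "r*\<delta>/2 = r * (\<delta>/2)" by simp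
    ultimately have "\<bar>real_of_int (snd p) - r * x0$2\<bar> \<le> r * (\<delta>/2)" unfolding abs_le_iff by linarith
    then have "\<bar>(real_of_int (snd p) - r * x0$2) / r\<bar> \<le> \<delta>/2" using r by (simp add: abs_div field_simps)
    then show ?thesis using r by (simp add: diff_divide_distrib)
  qed
  have "norm ((1/r) *\<^sub>R latt p - x0) \<le> (\<Sum>i\<in>UNIV. \<bar>((1/r) *\<^sub>R latt p - x0)$i\<bar>)"
    by (rule norm_le_l1_cart)
  also have "\<dots> = \<bar>((1/r) *\<^sub>R latt p - x0)$1\<bar> + \<bar>((1/r) *\<^sub>R latt p - x0)$2\<bar>"
    by (simp add: UNIV_2)
  also have "\<dots> \<le> \<delta>/2 + \<delta>/2" using i1 i2 by (simp add: latt_comp)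
  finally show ?thesis by simp
qed

lemma (in prob_space) main_r:
  fixes f :: "real^2 \<Rightarrow> real" and \<xi> :: "int \<times> int \<Rightarrow> 'a \<Rightarrow> real^2" and x0 :: "real^2"
  assumes \<xi>m[measurable]: "\<And>p. \<xi> p \<in> borel_measurable M"
    and ind: "indep_vars (\<lambda>_. borel) \<xi> UNIV"
    and dst: "\<And>p. distr M borel (\<xi> p) = distr M borel (\<xi> (0,0))"
    and fm[measurable]: "f \<in> borel_measurable borel"
    and B4: "\<And>z. (1+norm z)^4 * \<bar>f z\<bar> \<le> B4"
    and B0: "\<And>z. \<bar>f z\<bar> \<le> B0"
    and r: "r \<ge> 1"
    and a: "a > 0" and fx0: "\<bar>f x0\<bar> \<ge> 4*a"
    and \<delta>: "\<delta> > 0" and h\<delta>: "\<And>y. norm (y - x0) \<le> 2*\<delta> \<Longrightarrow> \<bar>f y - f x0\<bar> \<le> a"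
    and hRf: "\<And>y. norm y \<ge> Rf \<Longrightarrow> \<bar>f y\<bar> \<le> a"
    and \<eta>: "\<eta> \<ge> Rf + norm x0 + \<delta>"
    and small: "prob {\<omega>\<in>space M. norm (\<xi> (0,0) \<omega>) \<le> \<delta>*r} \<ge> 1/2"
    and cnt: "\<delta>*r \<ge> 2"
  shows "ereal (\<delta>^2*a^2/8 * r^2 * prob {\<omega>\<in>space M. norm (\<xi> (0,0) \<omega>) \<ge> \<eta>*r}) \<le> evariance M (linstat f \<xi> r)"
proof -
  define p where "p = prob {\<omega>\<in>space M. norm (\<xi> (0,0) \<omega>) \<ge> \<eta>*r}"
  define \<phi> where "\<phi> q y = f ((1/r) *\<^sub>R (latt q + y))" for q y
  have \<phi>m[measurable]: "\<phi> q \<in> borel_measurable borel" for q unfolding \<phi>_def by measurable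
  define A1 where "A1 = {\<lceil>r * x0$1 - r*\<delta>/2\<rceil>..\<lfloor>r * x0$1 - r*\<delta>/2 + r*\<delta>\<rfloor>}"
  define A2 where "A2 = {\<lceil>r * x0$2 - r*\<delta>/2\<rceil>..\<lfloor>r * x0$2 - r*\<delta>/2 + r*\<delta>\<rfloor>}"
  define S where "S = A1 \<times> A2"
  have finS: "finite S" unfolding S_def A1_def A2_def by simp
  have cardS: "real (card S) \<ge> (\<delta>*r/2)^2"
  proof -
    have c1: "real (card A1) \<ge> r*\<delta>/2" unfolding A1_def by (rule card_int_interval) (use cnt in \<open>simp add: mult.commute\<close>)
    have c2: "real (card A2) \<ge> r*\<delta>/2" unfolding A2_def by (rule card_int_interval) (use cnt in \<open>simp add: mult.commute\<close>)
    have "(\<delta>*r/2)^2 = (r*\<delta>/2) * (r*\<delta>/2)" by (simp add: power2_eq_square mult.commute)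
    also have "\<dots> \<le> real (card A1) * real (card A2)"
      using c1 c2 \<delta> r by (intro mult_mono) auto
    finally show ?thesis unfolding S_def by (simp add: card_cartesian_product)
  qed
  have Sx: "norm ((1/r) *\<^sub>R latt x - x0) \<le> \<delta>" if "x \<in> S" for x
    using that r unfolding S_def A1_def A2_def by (intro box_norm) auto
  have ptrans: "prob {\<omega>\<in>space M. \<xi> x \<omega> \<in> B} = prob {\<omega>\<in>space M. \<xi> (0,0) \<omega> \<in> B}" if "B \<in> sets borel" for x B
  proof -
    have "prob {\<omega>\<in>space M. \<xi> x \<omega> \<in> B} = measure (distr M borel (\<xi> x)) B"
      using that by (subst measure_distr) (auto simp: vimage_def Int_def conj_commute)
    also have "\<dots> = measure (distr M borel (\<xi> (0,0))) B" by (subst dst[of x]) (rule refl)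
    also have "\<dots> = prob {\<omega>\<in>space M. \<xi> (0,0) \<omega> \<in> B}"
      using that by (subst measure_distr) (auto simp: vimage_def Int_def conj_commute)
    finally show ?thesis .
  qed
  have pE1: "prob {\<omega>\<in>space M. norm (\<xi> x \<omega>) \<le> \<delta>*r} \<ge> 1/2" for x
    using ptrans[of "{y. norm y \<le> \<delta>*r}" x] small by simp
  have pE2: "prob {\<omega>\<in>space M. norm (\<xi> x \<omega>) \<ge> \<eta>*r} = p" for x
    using ptrans[of "{y. norm y \<ge> \<eta>*r}" x] unfolding p_def by simp
  define Y where "Y x \<omega> = \<phi> x (\<xi> x \<omega>)" for x \<omega>
  have Ym[measurable]: "Y x \<in> borel_measurable M" for x unfolding Y_def by measurable
  have Yb: "\<bar>Y x \<omega>\<bar> \<le> B0" for x \<omega> unfolding Y_def \<phi>_def by (rule B0)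
  have varx: "a^2 * (p/2) \<le> (\<integral>\<omega>. (Y x \<omega> - expectation (Y x))^2 \<partial>M)" if xS: "x \<in> S" for x
  proof -
    have "a^2 * min (prob {\<omega>\<in>space M. norm (\<xi> x \<omega>) \<le> \<delta>*r}) (prob {\<omega>\<in>space M. norm (\<xi> x \<omega>) \<ge> \<eta>*r})
        \<le> (\<integral>\<omega>. (Y x \<omega> - expectation (Y x))^2 \<partial>M)"
    proof (rule var_lower[where v="f x0"])
      show "integrable M (\<lambda>\<omega>. (Y x \<omega> - expectation (Y x))^2)"
      proof (rule int_bdd)
        show "(\<lambda>\<omega>. (Y x \<omega> - expectation (Y x))^2) \<in> borel_measurable M" by measurable
        fix \<omega>
        have hh: "\<bar>Y x \<omega> - expectation (Y x)\<bar> \<le> B0 + \<bar>expectation (Y x)\<bar>" using Yb[of x \<omega>] by linarith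
        show "\<bar>(Y x \<omega> - expectation (Y x))^2\<bar> \<le> (B0 + \<bar>expectation (Y x)\<bar>)^2"
          using power_mono[OF hh abs_ge_zero, of 2] by simp
      qed
      show "{\<omega>\<in>space M. norm (\<xi> x \<omega>) \<le> \<delta>*r} \<in> events" by measurable
      show "{\<omega>\<in>space M. norm (\<xi> x \<omega>) \<ge> \<eta>*r} \<in> events" by measurable
    next
      fix \<omega> assume "\<omega> \<in> {\<omega>\<in>space M. norm (\<xi> x \<omega>) \<le> \<delta>*r}"
      then have n: "norm (\<xi> x \<omega>) \<le> \<delta>*r" by simp
      have "norm ((1/r) *\<^sub>R (latt x + \<xi> x \<omega>) - x0) = norm (((1/r) *\<^sub>R latt x - x0) + (1/r) *\<^sub>R \<xi> x \<omega>)"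
        by (simp add: algebra_simps)
      also have "\<dots> \<le> norm ((1/r) *\<^sub>R latt x - x0) + norm ((1/r) *\<^sub>R \<xi> x \<omega>)" by (rule norm_triangle_ineq)
      also have "norm ((1/r) *\<^sub>R \<xi> x \<omega>) \<le> \<delta>" using n r by (simp add: field_simps)
      finally have "norm ((1/r) *\<^sub>R (latt x + \<xi> x \<omega>) - x0) \<le> 2*\<delta>" using Sx[OF xS] by linarith
      then show "\<bar>Y x \<omega> - f x0\<bar> \<le> a" unfolding Y_def \<phi>_def by (rule h\<delta>)
    next
      fix \<omega> assume "\<omega> \<in> {\<omega>\<in>space M. norm (\<xi> x \<omega>) \<ge> \<eta>*r}"
      then have n: "norm (\<xi> x \<omega>) \<ge> \<eta>*r" by simp
      have lx: "norm ((1/r) *\<^sub>R latt x) \<le> norm x0 + \<delta>"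
        using Sx[OF xS] norm_triangle_ineq2[of "(1/r) *\<^sub>R latt x" x0] by linarith
      have nx: "norm ((1/r) *\<^sub>R \<xi> x \<omega>) \<ge> \<eta>" using n r by (simp add: field_simps)
      have "norm ((1/r) *\<^sub>R \<xi> x \<omega>) - norm ((1/r) *\<^sub>R latt x) \<le> norm ((1/r) *\<^sub>R (latt x + \<xi> x \<omega>))"
        using norm_triangle_ineq2[of "(1/r) *\<^sub>R \<xi> x \<omega>" "-((1/r) *\<^sub>R latt x)"] by (simp add: algebra_simps)
      then have "norm ((1/r) *\<^sub>R (latt x + \<xi> x \<omega>)) \<ge> Rf" using lx nx \<eta> by linarith
      then show "\<bar>Y x \<omega>\<bar> \<le> a" unfolding Y_def \<phi>_def by (rule hRf)
    qed (use fx0 a in auto)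
    moreover have "min (prob {\<omega>\<in>space M. norm (\<xi> x \<omega>) \<le> \<delta>*r}) (prob {\<omega>\<in>space M. norm (\<xi> x \<omega>) \<ge> \<eta>*r}) \<ge> p/2"
    proof -
      have "p \<le> 1" unfolding p_def by simp
      then have "prob {\<omega>\<in>space M. norm (\<xi> x \<omega>) \<le> \<delta>*r} \<ge> p/2" using pE1[of x] by linarith
      moreover have "p \<ge> 0" unfolding p_def by simp
      ultimately show ?thesis using pE2[of x] by (simp add: min_def)
    qed
    ultimately show ?thesis
      by (smt (verit) a mult_left_mono zero_le_power2)
  qed
  define V where "V = (\<Sum>x\<in>S. \<integral>\<omega>. (Y x \<omega> - expectation (Y x))^2 \<partial>M)"
  have V: "\<delta>^2*a^2/8 * r^2 * p \<le> V"
  proof -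
    have p0: "p \<ge> 0" unfolding p_def by simp
    have "\<delta>^2*a^2/8 * r^2 * p = (\<delta>*r/2)^2 * (a^2 * (p/2))" by (simp add: power2_eq_square field_simps)
    also have "\<dots> \<le> real (card S) * (a^2 * (p/2))"
      using cardS p0 by (intro mult_right_mono) auto
    also have "\<dots> = (\<Sum>x\<in>S. a^2 * (p/2))" by simp
    also have "\<dots> \<le> V" unfolding V_def by (intro sum_mono varx)
    finally show ?thesis .
  qed
  define T where "T = linstat f \<xi> r"
  define m where "m = (\<integral>\<omega>. T \<omega> \<partial>M)"
  define X1 where "X1 \<omega> = restrict (\<lambda>i. \<xi> i \<omega>) S" for \<omega>
  define X2 where "X2 \<omega> = restrict (\<lambda>i. \<xi> i \<omega>) (-S)" for \<omega>
  define N1 where "N1 = PiM S (\<lambda>_. borel :: (real^2) measure)"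
  define N2 where "N2 = PiM (-S) (\<lambda>_. borel :: (real^2) measure)"
  have indr: "indep_vars (\<lambda>j. PiM (if j then -S else S) (\<lambda>_. borel)) (\<lambda>j \<omega>. restrict (\<lambda>i. \<xi> i \<omega>) (if j then -S else S)) UNIV"
    by (rule indep_vars_restrict[OF ind]) (auto simp: disjoint_family_on_def)
  have indX: "indep_var N2 X2 N1 X1"
    unfolding indep_var_def
    by (rule indep_vars_cong[THEN iffD1, OF _ _ _ indr]) (auto simp: X1_def X2_def N1_def N2_def split: bool.split)
  have cS: "countable (-S)" by simp
  have iS: "infinite (-S)"
    using finS by (metis Compl_eq_Diff_UNIV finite_Diff2 infinite_UNIV_char_0 finite_prod)
  have cm[measurable]: "(\<lambda>b. \<phi> q (b q)) \<in> borel_measurable N2" if "q \<in> -S" for q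
    unfolding N2_def using that by measurable
  have Pm[measurable]: "Measurable.pred N2 (\<lambda>b. (\<lambda>q. \<phi> q (b q)) summable_on -S)"
    by (rule measurable_infsum_countable(1)[OF cS iS cm])
  have hm[measurable]: "(\<lambda>b. infsum (\<lambda>q. \<phi> q (b q)) (-S)) \<in> borel_measurable N2"
    by (rule measurable_infsum_countable(2)[OF cS iS cm])
  have Am[measurable]: "(\<lambda>a. \<Sum>x\<in>S. \<phi> x (a x)) \<in> borel_measurable N1"
    unfolding N1_def by measurable
  define \<Phi> where "\<Phi> z = (if (\<lambda>q. \<phi> q (fst z q)) summable_on -S then (\<Sum>x\<in>S. \<phi> x (snd z x)) + infsum (\<lambda>q. \<phi> q (fst z q)) (-S) else 0)" for z
  define G where "G z = ennreal ((\<Phi> z - m)^2)" for z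
  have Gm: "G \<in> borel_measurable (N2 \<Otimes>\<^sub>M N1)"
    unfolding G_def \<Phi>_def by measurable
  have Teq: "T \<omega> = \<Phi> (X2 \<omega>, X1 \<omega>)" for \<omega>
  proof -
    have e1: "(\<lambda>q. \<phi> q (X2 \<omega> q)) summable_on -S \<longleftrightarrow> (\<lambda>q. \<phi> q (\<xi> q \<omega>)) summable_on -S"
      by (rule summable_on_cong) (simp add: X2_def)
    have e2: "infsum (\<lambda>q. \<phi> q (X2 \<omega> q)) (-S) = infsum (\<lambda>q. \<phi> q (\<xi> q \<omega>)) (-S)"
      by (rule infsum_cong) (simp add: X2_def)
    have e3: "(\<Sum>x\<in>S. \<phi> x (X1 \<omega> x)) = (\<Sum>x\<in>S. \<phi> x (\<xi> x \<omega>))"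
      by (rule sum.cong) (simp_all add: X1_def)
    have un: "S \<union> -S = UNIV" by auto
    have Tdef: "T \<omega> = infsum (\<lambda>q. \<phi> q (\<xi> q \<omega>)) UNIV"
      unfolding T_def linstat_def \<phi>_def ..
    show ?thesis
    proof (cases "(\<lambda>q. \<phi> q (\<xi> q \<omega>)) summable_on UNIV")
      case True
      then have sm: "(\<lambda>q. \<phi> q (\<xi> q \<omega>)) summable_on -S" by (rule summable_on_subset_banach) simp
      have "T \<omega> = infsum (\<lambda>q. \<phi> q (\<xi> q \<omega>)) (S \<union> -S)" unfolding Tdef un ..
      also have "\<dots> = (\<Sum>x\<in>S. \<phi> x (\<xi> x \<omega>)) + infsum (\<lambda>q. \<phi> q (\<xi> q \<omega>)) (-S)"
        by (subst infsum_Un_disjoint) (use finS sm in auto)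
      finally show ?thesis unfolding \<Phi>_def using sm e1 e2 e3 by simp
    next
      case False
      have "\<not> (\<lambda>q. \<phi> q (\<xi> q \<omega>)) summable_on -S"
      proof
        assume "(\<lambda>q. \<phi> q (\<xi> q \<omega>)) summable_on -S"
        then have "(\<lambda>q. \<phi> q (\<xi> q \<omega>)) summable_on (S \<union> -S)"
          by (intro summable_on_Un_disjoint) (use finS in auto)
        then show False using False un by simp
      qed
      then show ?thesis unfolding \<Phi>_def Tdef using False e1 infsum_not_exists by simp
    qed
  qed
  have Ymeas: "(\<lambda>\<omega>. \<phi> x (\<xi> x \<omega>)) \<in> borel_measurable M" for x by measurable
  have indY: "indep_vars (\<lambda>_. borel) Y S"
    unfolding Y_def
    by (rule indep_vars_compose2[OF indep_vars_subset[OF ind]]) auto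
  have inner: "AE \<omega> in M. ennreal V \<le> (\<integral>\<^sup>+ \<omega>'. G (X2 \<omega>, X1 \<omega>') \<partial>M)"
    using as_summable[of f B4 r \<xi>, OF fm B4 r \<xi>m dst]
  proof (rule AE_mp, intro AE_I2 impI)
    fix \<omega> assume su: "(\<lambda>p. f ((1/r) *\<^sub>R (latt p + \<xi> p \<omega>))) summable_on UNIV"
    have sm: "(\<lambda>q. \<phi> q (X2 \<omega> q)) summable_on -S"
    proof -
      have "(\<lambda>q. \<phi> q (\<xi> q \<omega>)) summable_on -S"
        by (rule summable_on_subset_banach[OF su[folded \<phi>_def]]) simp
      then show ?thesis by (subst summable_on_cong[where g="\<lambda>q. \<phi> q (\<xi> q \<omega>)"]) (auto simp: X2_def)
    qed
    define \<beta> where "\<beta> = infsum (\<lambda>q. \<phi> q (X2 \<omega> q)) (-S) - m"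
    have Geq: "G (X2 \<omega>, X1 \<omega>') = ennreal (((\<Sum>x\<in>S. Y x \<omega>') + \<beta>)^2)" for \<omega>'
    proof -
      have "(\<Sum>x\<in>S. \<phi> x (X1 \<omega>' x)) = (\<Sum>x\<in>S. Y x \<omega>')"
        by (rule sum.cong) (simp_all add: X1_def Y_def)
      then show ?thesis unfolding G_def \<Phi>_def \<beta>_def using sm by (simp add: algebra_simps)
    qed
    have intg: "integrable M (\<lambda>\<omega>'. ((\<Sum>x\<in>S. Y x \<omega>') + \<beta>)^2)"
    proof (rule int_bdd)
      show "(\<lambda>\<omega>'. ((\<Sum>x\<in>S. Y x \<omega>') + \<beta>)^2) \<in> borel_measurable M" by measurable
      fix \<omega>'
      have "\<bar>\<Sum>x\<in>S. Y x \<omega>'\<bar> \<le> (\<Sum>x\<in>S. \<bar>Y x \<omega>'\<bar>)" by (rule sum_abs)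
      also have "\<dots> \<le> (\<Sum>x\<in>S. B0)" by (intro sum_mono Yb)
      finally have hh: "\<bar>(\<Sum>x\<in>S. Y x \<omega>') + \<beta>\<bar> \<le> real (card S) * B0 + \<bar>\<beta>\<bar>" by simp
      show "\<bar>((\<Sum>x\<in>S. Y x \<omega>') + \<beta>)^2\<bar> \<le> (real (card S) * B0 + \<bar>\<beta>\<bar>)^2"
        using power_mono[OF hh abs_ge_zero, of 2] by simp
    qed
    have "(\<integral>\<^sup>+ \<omega>'. G (X2 \<omega>, X1 \<omega>') \<partial>M) = (\<integral>\<^sup>+ \<omega>'. ennreal (((\<Sum>x\<in>S. Y x \<omega>') + \<beta>)^2) \<partial>M)"
      unfolding Geq ..
    also have "\<dots> = ennreal (\<integral>\<omega>'. ((\<Sum>x\<in>S. Y x \<omega>') + \<beta>)^2 \<partial>M)"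
      by (rule nn_integral_eq_integral[OF intg]) simp
    finally have eqI: "(\<integral>\<^sup>+ \<omega>'. G (X2 \<omega>, X1 \<omega>') \<partial>M) = ennreal (\<integral>\<omega>'. ((\<Sum>x\<in>S. Y x \<omega>') + \<beta>)^2 \<partial>M)" .
    have "V \<le> (\<integral>\<omega>'. ((\<Sum>x\<in>S. Y x \<omega>') + \<beta>)^2 \<partial>M)"
      unfolding V_def by (rule var_sum_indep[OF finS indY, of B0]) (rule Yb)
    then show "ennreal V \<le> (\<integral>\<^sup>+ \<omega>'. G (X2 \<omega>, X1 \<omega>') \<partial>M)"
      unfolding eqI by (rule ennreal_leI)
  qed
  have main: "ennreal V \<le> (\<integral>\<^sup>+ \<omega>. G (X2 \<omega>, X1 \<omega>) \<partial>M)"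
    by (rule split_lower[OF indX Gm inner])
  have "evariance M (linstat f \<xi> r) = enn2ereal (\<integral>\<^sup>+ \<omega>. G (X2 \<omega>, X1 \<omega>) \<partial>M)"
    unfolding evariance_def G_def Teq[symmetric] m_def T_def ..
  moreover have "V \<ge> 0" unfolding V_def by (intro sum_nonneg integral_nonneg_AE) auto
  moreover have "p \<ge> 0" unfolding p_def by simp
  ultimately have "ereal V \<le> evariance M (linstat f \<xi> r)"
    using main by (metis enn2ereal_ennreal less_eq_ennreal.rep_eq)
  then show ?thesis using V unfolding p_def by (meson ereal_less_eq(3) order_trans)
qed

theorem lemma3p6:
  fixes M :: "'a measure" and f :: "real^2 \<Rightarrow> real" and \<xi> :: "int \<times> int \<Rightarrow> 'a \<Rightarrow> real^2"
    and x0 :: "real^2"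
  assumes "prob_space M"
    and "schwartz f"
    and "f x0 \<noteq> 0"
    and "\<And>p. \<xi> p \<in> borel_measurable M"
    and "prob_space.indep_vars M (\<lambda>_. borel) \<xi> UNIV"
    and "\<And>p. distr M borel (\<xi> p) = distr M borel (\<xi> (0, 0))"
  shows "\<exists>C>0. \<exists>\<eta>>0. \<exists>r0>0. \<exists>K::real. \<forall>r>r0.
           ereal (C * r\<^sup>2 * measure M {\<omega> \<in> space M. norm (\<xi> (0, 0) \<omega>) \<ge> \<eta> * r} - K / r)
             \<le> evariance M (linstat f \<xi> r)"
proof -
  interpret P: prob_space M by fact
  note \<xi>m[measurable] = assms(4)
  note ind = assms(5)
  note dst = assms(6)
  have sch: "\<And>is x. dmulti is f differentiable (at x)"
    "\<And>is N. \<exists>B. \<forall>x. (1 + norm x) ^ N * \<bar>dmulti is f x\<bar> \<le> B"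
    using assms(2) unfolding schwartz_def by blast+
  have diff: "f differentiable (at x)" for x using sch(1)[of "[]" x] by simp
  have cont: "continuous_on UNIV f"
    by (intro continuous_at_imp_continuous_on ballI differentiable_imp_continuous_within diff)
  have fm[measurable]: "f \<in> borel_measurable borel" by (rule borel_measurable_continuous_onI[OF cont])
  have "\<exists>B. \<forall>x. (1 + norm x) ^ 4 * \<bar>dmulti [] f x\<bar> \<le> B" using assms(2) unfolding schwartz_def by blast
  then obtain B4 where B4: "\<And>z. (1 + norm z)^4 * \<bar>f z\<bar> \<le> B4" by auto
  have "\<exists>B. \<forall>x. (1 + norm x) ^ 0 * \<bar>dmulti [] f x\<bar> \<le> B" using assms(2) unfolding schwartz_def by blast
  then obtain B0 where B0': "\<And>z. (1 + norm z)^0 * \<bar>f z\<bar> \<le> B0" by auto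
  have B0: "\<bar>f z\<bar> \<le> B0" for z using B0'[of z] by simp
  define a where "a = \<bar>f x0\<bar> / 4"
  have a: "a > 0" using assms(3) unfolding a_def by simp
  have fx0: "\<bar>f x0\<bar> \<ge> 4*a" unfolding a_def by simp
  obtain d where d: "d > 0" and hd: "\<And>y. dist y x0 < d \<Longrightarrow> dist (f y) (f x0) < a"
    using cont a unfolding continuous_on_iff by (meson UNIV_I)
  define \<delta> where "\<delta> = d/4"
  have \<delta>: "\<delta> > 0" unfolding \<delta>_def using d by simp
  have h\<delta>: "\<bar>f y - f x0\<bar> \<le> a" if "norm (y - x0) \<le> 2*\<delta>" for y
  proof -
    have "dist y x0 < d" using that d unfolding \<delta>_def by (simp add: dist_norm)
    then show ?thesis using hd[of y] by (simp add: dist_real_def)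
  qed
  define Rf where "Rf = \<bar>B4\<bar> / a"
  have Rf0: "Rf \<ge> 0" unfolding Rf_def using a by simp
  have hRf: "\<bar>f y\<bar> \<le> a" if "norm y \<ge> Rf" for y
  proof -
    have "1 + norm y \<le> (1 + norm y)^4"
      using power_increasing[of 1 4 "1 + norm y"] by simp
    moreover have "\<bar>B4\<bar> \<le> a * norm y" using that a unfolding Rf_def by (simp add: field_simps)
    ultimately have "B4 \<le> a * (1 + norm y)^4"
      using a by (smt (verit) mult_left_mono norm_ge_zero)
    then have "(1 + norm y)^4 * \<bar>f y\<bar> \<le> (1 + norm y)^4 * a" using B4[of y] by (simp add: mult.commute)
    moreover have "(1 + norm y)^4 > 0" using norm_ge_zero[of y] by (intro zero_less_power) linarith
    ultimately show ?thesis by simp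
  qed
  define \<eta> where "\<eta> = Rf + norm x0 + \<delta> + 1"
  have \<eta>0: "\<eta> > 0" unfolding \<eta>_def using Rf0 \<delta> by (simp add: add_nonneg_pos)
  obtain R where R: "P.prob {\<omega>\<in>space M. norm (\<xi> (0,0) \<omega>) \<le> R} \<ge> 1/2"
  proof -
    define A where "A n = {\<omega>\<in>space M. norm (\<xi> (0,0) \<omega>) \<le> real n}" for n :: nat
    have "range A \<subseteq> P.events" proof
      fix X assume "X \<in> range A"
      then obtain n where "X = A n" by auto
      have "A n \<in> P.events" unfolding A_def by measurable
      then show "X \<in> P.events" using \<open>X = A n\<close> by simp
    qed
    moreover have "incseq A" unfolding A_def incseq_def by auto
    ultimately have lim: "(\<lambda>n. P.prob (A n)) \<longlonglongrightarrow> P.prob (\<Union>n. A n)"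
      by (rule P.finite_Lim_measure_incseq)
    have "(\<Union>n. A n) = space M"
    proof
      show "space M \<subseteq> (\<Union>n. A n)"
      proof
        fix \<omega> assume "\<omega> \<in> space M"
        obtain n where "norm (\<xi> (0,0) \<omega>) \<le> real n" using real_arch_simple by blast
        then show "\<omega> \<in> (\<Union>n. A n)" using \<open>\<omega> \<in> space M\<close> unfolding A_def by blast
      qed
    qed (auto simp: A_def)
    then have lim1: "(\<lambda>n. P.prob (A n)) \<longlonglongrightarrow> 1" using lim by (simp add: P.prob_space)
    then obtain n where "\<bar>P.prob (A n) - 1\<bar> < 1/2"
      using LIMSEQ_D[OF lim1, of "1/2"] by (auto simp: dist_real_def)
    then have "P.prob (A n) \<ge> 1/2" by linarith
    then show ?thesis using that[of "real n"] unfolding A_def by blast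
  qed
  define r0 where "r0 = max 1 (max (R/\<delta>) (2/\<delta>))"
  have \<eta>ge: "\<eta> \<ge> Rf + norm x0 + \<delta>" unfolding \<eta>_def by simp
  have C0: "\<delta>^2*a^2/8 > 0" using a \<delta> by simp
  have r00: "r0 > 0" unfolding r0_def by simp
  have main: "\<forall>r>r0. ereal (\<delta>^2*a^2/8 * r\<^sup>2 * measure M {\<omega> \<in> space M. norm (\<xi> (0, 0) \<omega>) \<ge> \<eta> * r} - 0 / r)
             \<le> evariance M (linstat f \<xi> r)"
  proof (intro allI impI)
    fix r assume "r > r0"
    then have r: "r \<ge> 1" and rR: "\<delta>*r \<ge> R" and r2: "\<delta>*r \<ge> 2"
      unfolding r0_def using \<delta> by (auto simp: field_simps)
    have small: "P.prob {\<omega>\<in>space M. norm (\<xi> (0,0) \<omega>) \<le> \<delta>*r} \<ge> 1/2"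
    proof -
      have "P.prob {\<omega>\<in>space M. norm (\<xi> (0,0) \<omega>) \<le> R} \<le> P.prob {\<omega>\<in>space M. norm (\<xi> (0,0) \<omega>) \<le> \<delta>*r}"
        by (rule P.finite_measure_mono) (use rR in auto)
      then show ?thesis using R by linarith
    qed
    have "ereal (\<delta>^2*a^2/8 * r^2 * P.prob {\<omega>\<in>space M. norm (\<xi> (0,0) \<omega>) \<ge> \<eta>*r}) \<le> evariance M (linstat f \<xi> r)"
      by (rule P.main_r[OF \<xi>m ind dst fm B4 B0 r a fx0 \<delta> h\<delta> hRf \<eta>ge small r2])
    then show "ereal (\<delta>^2*a^2/8 * r\<^sup>2 * measure M {\<omega> \<in> space M. norm (\<xi> (0, 0) \<omega>) \<ge> \<eta> * r} - 0 / r)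
             \<le> evariance M (linstat f \<xi> r)" by simp
  qed
  show ?thesis
    apply (rule exI[of _ "\<delta>^2*a^2/8"], rule conjI, rule C0)
    apply (rule exI[of _ \<eta>], rule conjI, rule \<eta>0)
    apply (rule exI[of _ r0], rule conjI, rule r00)
    apply (rule exI[of _ 0])
    by (rule main)
qed

end
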